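(* Let $G$ be a prime graph and let $A,B$ be disjoint subsets of $V(G)$ with $|A|,|B|\ge 2$. Suppose there exist nonempty sets $A_0\subseteq A$ and $B_0\subseteq B$ such that the set of all edges between $A$ and $B$ is $\{xy: x\in A_0,\ y\in B_0\}$. Let $\ell_0=3$ if $|A_0|=|B_0|=1$; $\ell_0=4$ if exactly one of $|A_0|=1$, $|B_0|=1$ holds (i.e. $|A_0|=1$ or $|B_0|=1$ but not both); and $\ell_0=6$ otherwise. Then there exists a graph $G'$ locally equivalent to $G$ such that (i) $G[A\cup B]=G'[A\cup B]$, and (ii) $G'$ has a blocking sequence for $(A,B)$ of length at most $\ell_0$.
   Context: Graphs are finite, simple, undirected. $G*v$ is local complementation at $v$; two graphs are locally equivalent if one is obtained from the other by a sequence of local complementations. A split of $G$ is a partition $(X,Y)$ of $V(G)$ with $|X|,|Y|\ge2$ such that there are $X'\subseteq X,Y'\subseteq Y$ with $x\in X$ adjacent to $y\in Y$ iff $x\in X'$ and $y\in Y'$; $G$ is prime if it has no split. For disjoint $X,Y$, $\rho^*_G(X,Y)$ is the binary rank of the adjacency submatrix with rows $X$, columns $Y$. A blocking sequence for disjoint $(A,B)$ is a sequence $v_1,\dots,v_m$ ($m\ge1$) of vertices of $V(G)\setminus(A\cup B)$ with (a) $\rho^*_G(A,B\cup\{v_1\})>\rho^*_G(A,B)$; (b) $\rho^*_G(A\cup\{v_i\},B\cup\{v_{i+1}\})>\rho^*_G(A,B)$ for $i=1,\dots,m-1$; (c) $\rho^*_G(A\cup\{v_m\},B)>\rho^*_G(A,B)$;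 (d) no proper subsequence satisfies (a)–(c). Its length is $m$. *)

theory Defs
  imports Main "HOL-Library.Sublist"
begin

definition graph :: "'a set \<Rightarrow> ('a \<Rightarrow> 'a \<Rightarrow> bool) \<Rightarrow> bool" where
  "graph V E \<longleftrightarrow> finite V \<and> (\<forall>x y. E x y \<longrightarrow> E y x) \<and> (\<forall>x. \<not> E x x)
     \<and> (\<forall>x y. E x y \<longrightarrow> x \<in> V \<and> y \<in> V)"

definition local_comp :: "('a \<Rightarrow> 'a \<Rightarrow> bool) \<Rightarrow> 'a \<Rightarrow> ('a \<Rightarrow> 'a \<Rightarrow> bool)" where
  "local_comp E v = (\<lambda>x y. if x \<noteq> y \<and> E v x \<and> E v y then \<not> E x y else E x y)"

inductive locally_equiv :: "'a set \<Rightarrow> ('a \<Rightarrow> 'a \<Rightarrow> bool) \<Rightarrow> ('a \<Rightarrow> 'a \<Rightarrow> bool) \<Rightarrow> bool"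
  for V where
  refl: "locally_equiv V E E"
| step: "locally_equiv V E E' \<Longrightarrow> v \<in> V \<Longrightarrow> locally_equiv V E (local_comp E' v)"

definition is_split :: "'a set \<Rightarrow> ('a \<Rightarrow> 'a \<Rightarrow> bool) \<Rightarrow> 'a set \<Rightarrow> 'a set \<Rightarrow> bool" where
  "is_split V E X Y \<longleftrightarrow> X \<inter> Y = {} \<and> X \<union> Y = V \<and> card X \<ge> 2 \<and> card Y \<ge> 2 \<and>
     (\<exists>X' Y'. X' \<subseteq> X \<and> Y' \<subseteq> Y \<and> (\<forall>x\<in>X. \<forall>y\<in>Y. E x y \<longleftrightarrow> x \<in> X' \<and> y \<in> Y'))"

definition prime_graph :: "'a set \<Rightarrow> ('a \<Rightarrow> 'a \<Rightarrow> bool) \<Rightarrow> bool" where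
  "prime_graph V E \<longleftrightarrow> (\<nexists>X Y. is_split V E X Y)"

text \<open>A set R of
  rows is GF(2)-independent iff no nonempty subset of R sums to the zero vector,
  i.e. for every nonempty T \<subseteq> R some column y has an odd number of ones in rows T.\<close>
definition gf2_indep_rows :: "('a \<Rightarrow> 'a \<Rightarrow> bool) \<Rightarrow> 'a set \<Rightarrow> 'a set \<Rightarrow> bool" where
  "gf2_indep_rows E R Y \<longleftrightarrow>
     (\<forall>T. T \<subseteq> R \<and> T \<noteq> {} \<longrightarrow> (\<exists>y\<in>Y. odd (card {x\<in>T. E x y})))"

definition cut_rank :: "('a \<Rightarrow> 'a \<Rightarrow> bool) \<Rightarrow> 'a set \<Rightarrow> 'a set \<Rightarrow> nat" where
  "cut_rank E X Y = Max (card ` {R. R \<subseteq> X \<and> gf2_indep_rows E R Y})"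

definition blocking_cond :: "('a \<Rightarrow> 'a \<Rightarrow> bool) \<Rightarrow> 'a set \<Rightarrow> 'a set \<Rightarrow> 'a list \<Rightarrow> bool" where
  "blocking_cond E A B vs \<longleftrightarrow> vs \<noteq> [] \<and>
     cut_rank E A (B \<union> {vs ! 0}) > cut_rank E A B \<and>
     (\<forall>i. i + 1 < length vs \<longrightarrow>
        cut_rank E (A \<union> {vs ! i}) (B \<union> {vs ! (i+1)}) > cut_rank E A B) \<and>
     cut_rank E (A \<union> {last vs}) B > cut_rank E A B"

definition blocking_sequence ::
  "'a set \<Rightarrow> ('a \<Rightarrow> 'a \<Rightarrow> bool) \<Rightarrow> 'a set \<Rightarrow> 'a set \<Rightarrow> 'a list \<Rightarrow> bool" where
  "blocking_sequence V E A B vs \<longleftrightarrow>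
     set vs \<subseteq> V - (A \<union> B) \<and> blocking_cond E A B vs \<and>
     (\<forall>ws. subseq ws vs \<and> ws \<noteq> vs \<longrightarrow> \<not> blocking_cond E A B ws)"

end

theory Submission
  imports Defs
begin


definition two_rows :: "('a \<Rightarrow> 'a \<Rightarrow> bool) \<Rightarrow> 'a set \<Rightarrow> 'a set \<Rightarrow> bool" where
  "two_rows E X Y \<longleftrightarrow> (\<exists>x\<in>X. \<exists>x'\<in>X. (\<exists>y\<in>Y. E x y) \<and> (\<exists>y\<in>Y. E x' y) \<and> (\<exists>y\<in>Y. E x y \<noteq> E x' y))"

lemma card_sing_filter: "card {z\<in>{x}. P z} = (if P x then 1 else 0)"
proof -
  have "{z\<in>{x}. P z} = (if P x then {x} else {})" by auto
  then show ?thesis by simp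
qed

lemma card_sing_filter2: "card {z. z = x \<and> P z} = (if P x then 1 else 0)"
proof -
  have "{z. z = x \<and> P z} = (if P x then {x} else {})" by auto
  then show ?thesis by simp
qed

lemma card_pair_filter2: "x \<noteq> x' \<Longrightarrow> card {z. (z = x \<or> z = x') \<and> P z} = (if P x then 1 else 0) + (if P x' then 1 else 0)"
proof -
  assume "x \<noteq> x'"
  have "{z. (z = x \<or> z = x') \<and> P z} = (if P x then {x} else {}) \<union> (if P x' then {x'} else {})" by auto
  then show ?thesis using \<open>x \<noteq> x'\<close> by (auto simp: card_insert_if)
qed

lemma two_elems: "2 \<le> card R \<Longrightarrow> \<exists>x\<in>R. \<exists>x'\<in>R. x \<noteq> x'"
proof -
  assume a: "2 \<le> card R"
  then have "finite R" by (metis card.infinite not_numeral_le_zero)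
  then show ?thesis using a card_le_Suc0_iff_eq[of R] by auto
qed

lemma card_pair_filter: "x \<noteq> x' \<Longrightarrow> card {z\<in>{x,x'}. P z} = (if P x then 1 else 0) + (if P x' then 1 else 0)"
proof -
  assume "x \<noteq> x'"
  have "{z\<in>{x,x'}. P z} = (if P x then {x} else {}) \<union> (if P x' then {x'} else {})" by auto
  then show ?thesis using \<open>x \<noteq> x'\<close> by (auto simp: card_insert_if)
qed

lemma cut_rank_cong:
  assumes "\<And>x y. x \<in> X \<Longrightarrow> y \<in> Y \<Longrightarrow> E x y = E' x y"
  shows "cut_rank E X Y = cut_rank E' X Y"
proof -
  have "\<And>R. R \<subseteq> X \<Longrightarrow> gf2_indep_rows E R Y = gf2_indep_rows E' R Y"
  proof -
    fix R assume R: "R \<subseteq> X"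
    have eq: "\<And>T y. T \<subseteq> R \<Longrightarrow> y \<in> Y \<Longrightarrow> {x\<in>T. E x y} = {x\<in>T. E' x y}"
      using assms R by blast
    show "gf2_indep_rows E R Y = gf2_indep_rows E' R Y"
      unfolding gf2_indep_rows_def
    proof (intro iffI allI impI)
      fix T assume h: "\<forall>T. T \<subseteq> R \<and> T \<noteq> {} \<longrightarrow> (\<exists>y\<in>Y. odd (card {x \<in> T. E x y}))"
        and T: "T \<subseteq> R \<and> T \<noteq> {}"
      then obtain y where y: "y\<in>Y" "odd (card {x \<in> T. E x y})" by blast
      moreover have "{x \<in> T. E x y} = {x \<in> T. E' x y}" using eq[of T y] T y by blast
      ultimately show "\<exists>y\<in>Y. odd (card {x \<in> T. E' x y})" by (intro bexI[of _ y]) simp_all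
    next
      fix T assume h: "\<forall>T. T \<subseteq> R \<and> T \<noteq> {} \<longrightarrow> (\<exists>y\<in>Y. odd (card {x \<in> T. E' x y}))"
        and T: "T \<subseteq> R \<and> T \<noteq> {}"
      then obtain y where y: "y\<in>Y" "odd (card {x \<in> T. E' x y})" by blast
      moreover have "{x \<in> T. E x y} = {x \<in> T. E' x y}" using eq[of T y] T y by blast
      ultimately show "\<exists>y\<in>Y. odd (card {x \<in> T. E x y})" by (intro bexI[of _ y]) simp_all
    qed
  qed
  then have "{R. R \<subseteq> X \<and> gf2_indep_rows E R Y} = {R. R \<subseteq> X \<and> gf2_indep_rows E' R Y}" by blast
  then show ?thesis unfolding cut_rank_def by simp
qed

lemma rank2_iff:
  assumes "finite X"
  shows "2 \<le> cut_rank E X Y \<longleftrightarrow> two_rows E X Y"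
proof -
  let ?S = "card ` {R. R \<subseteq> X \<and> gf2_indep_rows E R Y}"
  have fin: "finite ?S" using assms by simp
  have ne: "?S \<noteq> {}"
  proof -
    have "gf2_indep_rows E {} Y" unfolding gf2_indep_rows_def by auto
    then show ?thesis by blast
  qed
  show ?thesis
  proof
    assume "2 \<le> cut_rank E X Y"
    then have "Max ?S \<in> ?S" "2 \<le> Max ?S" using fin ne unfolding cut_rank_def by auto
    then obtain R where R: "R \<subseteq> X" "gf2_indep_rows E R Y" "2 \<le> card R" by auto
    then obtain x x' where xx: "x \<in> R" "x' \<in> R" "x \<noteq> x'"
      using two_elems by blast
    have i1: "\<exists>y\<in>Y. odd (card {z\<in>{x}. E z y})"
      using R(2) unfolding gf2_indep_rows_def apply (erule_tac x="{x}" in allE) using xx by auto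
    have i2: "\<exists>y\<in>Y. odd (card {z\<in>{x'}. E z y})"
      using R(2) unfolding gf2_indep_rows_def apply (erule_tac x="{x'}" in allE) using xx by auto
    have i3: "\<exists>y\<in>Y. odd (card {z\<in>{x,x'}. E z y})"
      using R(2) unfolding gf2_indep_rows_def apply (erule_tac x="{x,x'}" in allE) using xx by auto
    have "\<exists>y\<in>Y. E x y" using i1 by (auto simp: card_sing_filter card_sing_filter2 split: if_splits)
    moreover have "\<exists>y\<in>Y. E x' y" using i2 by (auto simp: card_sing_filter card_sing_filter2 split: if_splits)
    moreover have "\<exists>y\<in>Y. E x y \<noteq> E x' y" using i3 xx(3) by (auto simp: card_pair_filter card_pair_filter2 split: if_splits)
    ultimately show "two_rows E X Y" using xx R(1) unfolding two_rows_def by blast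
  next
    assume "two_rows E X Y"
    then obtain x x' y1 y2 y3 where h: "x \<in> X" "x' \<in> X" "y1 \<in> Y" "E x y1" "y2 \<in> Y" "E x' y2"
      "y3 \<in> Y" "E x y3 \<noteq> E x' y3" unfolding two_rows_def by blast
    then have ne: "x \<noteq> x'" by auto
    have ind: "gf2_indep_rows E {x,x'} Y"
      unfolding gf2_indep_rows_def
    proof (intro allI impI)
      fix T assume T: "T \<subseteq> {x,x'} \<and> T \<noteq> {}"
      then have "T = {x} \<or> T = {x'} \<or> T = {x,x'}" by blast
      then show "\<exists>y\<in>Y. odd (card {z\<in>T. E z y})"
      proof (elim disjE)
        assume "T = {x}" then show ?thesis using h by (auto simp: card_sing_filter card_sing_filter2)
      next
        assume "T = {x'}" then show ?thesis using h by (auto simp: card_sing_filter card_sing_filter2)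
      next
        assume "T = {x,x'}" then show ?thesis using h ne
          by (intro bexI[of _ y3]) (auto simp: card_pair_filter card_pair_filter2)
      qed
    qed
    have "{x,x'} \<in> {R. R \<subseteq> X \<and> gf2_indep_rows E R Y}" using ind h by auto
    then have "card {x,x'} \<in> ?S" by (rule imageI)
    then have "card {x,x'} \<le> Max ?S" using fin by simp
    then show "2 \<le> cut_rank E X Y" using ne unfolding cut_rank_def by simp
  qed
qed

lemma rank_pos:
  assumes "finite X" "x \<in> X" "y \<in> Y" "E x y"
  shows "1 \<le> cut_rank E X Y"
proof -
  let ?S = "card ` {R. R \<subseteq> X \<and> gf2_indep_rows E R Y}"
  have "gf2_indep_rows E {x} Y" unfolding gf2_indep_rows_def
  proof (intro allI impI)
    fix T assume "T \<subseteq> {x} \<and> T \<noteq> {}" then have "T = {x}" by blast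
    then show "\<exists>y\<in>Y. odd (card {z\<in>T. E z y})" using assms(3,4) by (intro bexI[of _ y]) (simp_all add: card_sing_filter card_sing_filter2)
  qed
  then have "{x} \<in> {R. R \<subseteq> X \<and> gf2_indep_rows E R Y}" using assms by auto
  then have "card {x} \<in> ?S" by (rule imageI)
  then have "card {x} \<le> Max ?S" using assms(1) by simp
  then show ?thesis unfolding cut_rank_def by simp
qed

definition walk :: "('a \<Rightarrow> bool) \<Rightarrow> ('a \<Rightarrow> bool) \<Rightarrow> ('a \<Rightarrow> 'a \<Rightarrow> bool) \<Rightarrow> 'a list \<Rightarrow> bool" where
  "walk st en lk L \<longleftrightarrow> L \<noteq> [] \<and> st (L!0) \<and> en (last L) \<and> (\<forall>i. i+1 < length L \<longrightarrow> lk (L!i) (L!(i+1)))"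

lemma walk_cong:
  assumes "\<And>x. x \<in> set L \<Longrightarrow> st x = st' x" "\<And>x. x \<in> set L \<Longrightarrow> en x = en' x"
    "\<And>x y. x \<in> set L \<Longrightarrow> y \<in> set L \<Longrightarrow> lk x y = lk' x y"
  shows "walk st en lk L = walk st' en' lk' L"
proof -
  have "L \<noteq> [] \<Longrightarrow> L!0 \<in> set L" by simp
  moreover have "L \<noteq> [] \<Longrightarrow> last L \<in> set L" by simp
  moreover have "\<And>i. i+1 < length L \<Longrightarrow> L!i \<in> set L \<and> L!(i+1) \<in> set L" by simp
  ultimately show ?thesis unfolding walk_def using assms by (metis (no_types, lifting))
qed

locale ABs =
  fixes A B A0 B0 :: "'a set"
  assumes finA: "finite A" and finB: "finite B" and disj: "A \<inter> B = {}"
    and A0A: "A0 \<subseteq> A" and B0B: "B0 \<subseteq> B" and A0ne: "A0 \<noteq> {}" and B0ne: "B0 \<noteq> {}"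
begin

definition str :: "('a \<Rightarrow> 'a \<Rightarrow> bool) \<Rightarrow> bool" where
  "str F \<longleftrightarrow> (\<forall>x\<in>A. \<forall>y\<in>B. F x y \<longleftrightarrow> x \<in> A0 \<and> y \<in> B0)"
definition NA :: "('a \<Rightarrow> 'a \<Rightarrow> bool) \<Rightarrow> 'a \<Rightarrow> 'a set" where
  "NA F w = {a\<in>A. F a w}"
definition NB :: "('a \<Rightarrow> 'a \<Rightarrow> bool) \<Rightarrow> 'a \<Rightarrow> 'a set" where
  "NB F u = {b\<in>B. F u b}"
definition wA :: "('a \<Rightarrow> 'a \<Rightarrow> bool) \<Rightarrow> 'a \<Rightarrow> bool" where
  "wA F w \<longleftrightarrow> NA F w \<noteq> {} \<and> NA F w \<noteq> A0"
definition wB :: "('a \<Rightarrow> 'a \<Rightarrow> bool) \<Rightarrow> 'a \<Rightarrow> bool" where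
  "wB F u \<longleftrightarrow> NB F u \<noteq> {} \<and> NB F u \<noteq> B0"

lemma rankAB: assumes "str F" shows "cut_rank F A B = 1"
proof -
  obtain a where a: "a \<in> A0" using A0ne by blast
  obtain b where b: "b \<in> B0" using B0ne by blast
  have "1 \<le> cut_rank F A B"
    using rank_pos[where X=A and x=a and Y=B and y=b and E=F] a b A0A B0B assms finA unfolding str_def by blast
  moreover have "\<not> two_rows F A B"
    using assms unfolding two_rows_def str_def by auto
  then have "\<not> 2 \<le> cut_rank F A B" using rank2_iff finA by blast
  ultimately show ?thesis by simp
qed

lemma cA: assumes "str F" "w \<notin> B"
  shows "2 \<le> cut_rank F A (B \<union> {w}) \<longleftrightarrow> wA F w"
proof -
  have "two_rows F A (B \<union> {w}) \<longleftrightarrow> wA F w"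
  proof
    assume t: "two_rows F A (B \<union> {w})"
    show "wA F w"
    proof (rule ccontr)
      assume nw: "\<not> wA F w"
      then have c: "NA F w = {} \<or> NA F w = A0" unfolding wA_def by blast
      from t obtain x x' where xx: "x \<in> A" "x' \<in> A" "\<exists>y\<in>B \<union> {w}. F x y" "\<exists>y\<in>B \<union> {w}. F x' y"
        "\<exists>y\<in>B \<union> {w}. F x y \<noteq> F x' y" unfolding two_rows_def by blast
      have fx: "\<And>z. z \<in> A \<Longrightarrow> F z w \<longleftrightarrow> z \<in> NA F w" unfolding NA_def by auto
      have "x \<in> A0" using xx(1,3) c assms(1) fx A0A unfolding str_def by auto
      moreover have "x' \<in> A0" using xx(2,4) c assms(1) fx A0A unfolding str_def by auto
      ultimately show False using xx(1,2,5) c assms(1) fx unfolding str_def by auto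
    qed
  next
    assume w: "wA F w"
    obtain b where b: "b \<in> B0" using B0ne by blast
    have NAsub: "NA F w \<subseteq> A" unfolding NA_def by auto
    show "two_rows F A (B \<union> {w})"
    proof (cases "A0 \<subseteq> NA F w")
      case True
      then obtain x' where x': "x' \<in> NA F w" "x' \<notin> A0" using w unfolding wA_def by blast
      obtain a where a: "a \<in> A0" using A0ne by blast
      have "a \<in> A" "x' \<in> A" using a x' A0A NAsub by auto
      moreover have "F a b" "F x' w" "\<not> F x' b" using a b x' True assms(1) B0B A0A NAsub
        unfolding str_def NA_def by auto
      ultimately show ?thesis unfolding two_rows_def using b B0B by blast
    next
      case False
      then obtain a where a: "a \<in> A0" "a \<notin> NA F w" by blast
      obtain x' where x': "x' \<in> NA F w" using w unfolding wA_def by blast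
      have aA: "a \<in> A" "x' \<in> A" using a x' A0A NAsub by auto
      have Fab: "F a b" "\<not> F a w" "F x' w" using a b x' aA assms(1) B0B unfolding str_def NA_def by auto
      show ?thesis unfolding two_rows_def
        using aA Fab b B0B by (intro bexI[of _ a] bexI[of _ x']) auto
    qed
  qed
  moreover have "finite A" by (rule finA)
  ultimately show ?thesis using rank2_iff by blast
qed

lemma cB: assumes "str F" "u \<notin> A"
  shows "2 \<le> cut_rank F (A \<union> {u}) B \<longleftrightarrow> wB F u"
proof -
  have "two_rows F (A \<union> {u}) B \<longleftrightarrow> wB F u"
  proof
    assume t: "two_rows F (A \<union> {u}) B"
    show "wB F u"
    proof (rule ccontr)
      assume nw: "\<not> wB F u"
      then have c: "NB F u = {} \<or> NB F u = B0" unfolding wB_def by blast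
      have fu: "\<And>y. y \<in> B \<Longrightarrow> F u y \<longleftrightarrow> y \<in> NB F u" unfolding NB_def by auto
      have rows: "\<And>x. x \<in> A \<union> {u} \<Longrightarrow> (\<exists>y\<in>B. F x y) \<Longrightarrow> (\<forall>y\<in>B. F x y \<longleftrightarrow> y \<in> B0)"
        using c fu assms(1) B0B unfolding str_def by auto
      from t show False unfolding two_rows_def using rows by blast
    qed
  next
    assume w: "wB F u"
    obtain a where a: "a \<in> A0" using A0ne by blast
    have NBsub: "NB F u \<subseteq> B" unfolding NB_def by auto
    have aA: "a \<in> A" using a A0A by auto
    obtain y0 where y0: "y0 \<in> NB F u" using w unfolding wB_def by blast
    obtain y1 where y1: "y1 \<in> B" "y1 \<in> B0 \<longleftrightarrow> y1 \<notin> NB F u"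
      using w NBsub B0B unfolding wB_def by blast
    obtain b where b: "b \<in> B0" using B0ne by blast
    have "F a b" using a b aA B0B assms(1) unfolding str_def by auto
    moreover have "F u y0" "y0 \<in> B" using y0 unfolding NB_def by auto
    moreover have "F a y1 \<noteq> F u y1" using y1 aA a assms(1) unfolding str_def NB_def by auto
    ultimately show "two_rows F (A \<union> {u}) B" unfolding two_rows_def
      using aA b B0B y1 by (intro bexI[of _ a] bexI[of _ u]) auto
  qed
  moreover have "finite (A \<union> {u})" using finA by simp
  ultimately show ?thesis using rank2_iff by blast
qed

lemma cL: assumes "str F" "u \<notin> A \<union> B" "w \<notin> A \<union> B" "u \<noteq> w" "\<not> wA F w" "\<not> wB F u"
  shows "2 \<le> cut_rank F (A \<union> {u}) (B \<union> {w}) \<longleftrightarrow> F u w \<noteq> (NB F u = B0 \<and> NA F w = A0)"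
proof -
  define al where "al = (NA F w = A0)"
  define be where "be = (NB F u = B0)"
  have ca: "NA F w = {} \<or> NA F w = A0" using assms(5) unfolding wA_def by blast
  have cb: "NB F u = {} \<or> NB F u = B0" using assms(6) unfolding wB_def by blast
  have rowA: "\<And>a y. a \<in> A \<Longrightarrow> y \<in> B \<union> {w} \<Longrightarrow> F a y \<longleftrightarrow> (a \<in> A0 \<and> (y \<in> B0 \<or> (y = w \<and> al)))"
  proof -
    fix a y assume a: "a \<in> A" and y: "y \<in> B \<union> {w}"
    show "F a y \<longleftrightarrow> (a \<in> A0 \<and> (y \<in> B0 \<or> (y = w \<and> al)))"
    proof (cases "y = w")
      case True
      have "F a w \<longleftrightarrow> a \<in> NA F w" using a unfolding NA_def by auto
      then show ?thesis using True ca al_def assms(3) B0B A0ne by auto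
    next
      case False
      then have "y \<in> B" using y by auto
      then show ?thesis using a False assms(1) unfolding str_def by auto
    qed
  qed
  have rowU: "\<And>y. y \<in> B \<union> {w} \<Longrightarrow> F u y \<longleftrightarrow> ((y \<in> B0 \<and> be) \<or> (y = w \<and> F u w))"
  proof -
    fix y assume y: "y \<in> B \<union> {w}"
    show "F u y \<longleftrightarrow> ((y \<in> B0 \<and> be) \<or> (y = w \<and> F u w))"
    proof (cases "y = w")
      case True then show ?thesis using assms(3) B0B by auto
    next
      case False
      then have "y \<in> B" using y by auto
      then have "F u y \<longleftrightarrow> y \<in> NB F u" unfolding NB_def by auto
      then show ?thesis using cb be_def False B0B B0ne by auto
    qed
  qed
  have wB': "w \<notin> B" "w \<notin> B0" using assms(3) B0B by auto
  have "two_rows F (A \<union> {u}) (B \<union> {w}) \<longleftrightarrow> F u w \<noteq> (be \<and> al)"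
  proof
    assume t: "two_rows F (A \<union> {u}) (B \<union> {w})"
    show "F u w \<noteq> (be \<and> al)"
    proof
      assume eq: "F u w = (be \<and> al)"
      have rows: "\<And>x. x \<in> A \<union> {u} \<Longrightarrow> (\<exists>y\<in>B \<union> {w}. F x y) \<Longrightarrow>
          (\<forall>y\<in>B \<union> {w}. F x y \<longleftrightarrow> (y \<in> B0 \<or> (y = w \<and> al)))"
      proof -
        fix x assume x: "x \<in> A \<union> {u}" and nz: "\<exists>y\<in>B \<union> {w}. F x y"
        show "\<forall>y\<in>B \<union> {w}. F x y \<longleftrightarrow> (y \<in> B0 \<or> (y = w \<and> al))"
        proof (cases "x = u")
          case True
          then have "be" using nz rowU eq by auto
          then show ?thesis using True rowU eq by auto
        next
          case False
          then have xA: "x \<in> A" using x by auto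
          then have "x \<in> A0" using nz rowA by auto
          then show ?thesis using rowA xA by auto
        qed
      qed
      from t show False unfolding two_rows_def using rows by blast
    qed
  next
    assume ne: "F u w \<noteq> (be \<and> al)"
    obtain a where a: "a \<in> A0" using A0ne by blast
    obtain b where b: "b \<in> B0" using B0ne by blast
    have aA: "a \<in> A" using a A0A by auto
    have bB: "b \<in> B" using b B0B by auto
    have Fab: "F a b" using rowA[OF aA] a b bB by auto
    have Faw: "F a w \<longleftrightarrow> al" using rowA[OF aA, of w] a wB' by auto
    have Fub: "F u b \<longleftrightarrow> be" using rowU[of b] b bB wB' by auto
    show "two_rows F (A \<union> {u}) (B \<union> {w})"
    proof (cases be)
      case True
      then show ?thesis unfolding two_rows_def using aA Fab Fub Faw ne bB
        by (intro bexI[of _ a] bexI[of _ u] conjI bexI[of _ b] bexI[of _ w]) auto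
    next
      case False
      then have "F u w" using ne by auto
      then show ?thesis unfolding two_rows_def using aA Fab Fub bB False
        by (intro bexI[of _ a] bexI[of _ u] conjI bexI[of _ b] bexI[of _ w]) auto
    qed
  qed
  moreover have "finite (A \<union> {u})" using finA by simp
  ultimately show ?thesis using rank2_iff al_def be_def by blast
qed

definition lk :: "('a \<Rightarrow> 'a \<Rightarrow> bool) \<Rightarrow> 'a \<Rightarrow> 'a \<Rightarrow> bool" where
  "lk F u w \<longleftrightarrow> 2 \<le> cut_rank F (A \<union> {u}) (B \<union> {w})"

lemma bc_iff: assumes "str F" "set vs \<inter> (A \<union> B) = {}"
  shows "blocking_cond F A B vs \<longleftrightarrow> walk (wA F) (wB F) (lk F) vs"
proof -
  have r: "cut_rank F A B = 1" using rankAB[OF assms(1)] .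
  have "blocking_cond F A B vs \<longleftrightarrow> walk (\<lambda>v. 2 \<le> cut_rank F A (B \<union> {v})) (\<lambda>v. 2 \<le> cut_rank F (A \<union> {v}) B) (lk F) vs"
    unfolding blocking_cond_def walk_def lk_def r by (auto simp: numeral_2_eq_2 Suc_le_eq)
  also have "\<dots> \<longleftrightarrow> walk (wA F) (wB F) (lk F) vs"
  proof -
    have d: "\<And>x. x \<in> set vs \<Longrightarrow> x \<notin> A \<and> x \<notin> B" using assms(2) by auto
    show ?thesis
      apply (rule walk_cong)
      subgoal for x using d[of x] cA[OF assms(1), of x] by simp
      subgoal for x using d[of x] cB[OF assms(1), of x] by simp
      by simp
  qed
  finally show ?thesis .
qed

lemma exists_walk:
  assumes g: "graph V E" and pr: "prime_graph V E" and AV: "A \<subseteq> V" and BV: "B \<subseteq> V"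
    and s: "str E" and cA2: "card A \<ge> 2" and cB2: "card B \<ge> 2"
  shows "\<exists>L. set L \<subseteq> V - (A \<union> B) \<and> walk (wA E) (wB E) (lk E) L"
proof (rule ccontr)
  assume nw: "\<not> ?thesis"
  define S where "S = V - (A \<union> B)"
  define T where "T = {v\<in>S. \<exists>L. L \<noteq> [] \<and> L!0 = v \<and> set L \<subseteq> S \<and> wB E (last L) \<and>
      (\<forall>i. i+1 < length L \<longrightarrow> lk E (L!i) (L!(i+1)))}"
  have finV: "finite V" using g unfolding graph_def by auto
  have TS: "T \<subseteq> S" unfolding T_def by auto
  have T_nA: "\<And>v. v \<in> T \<Longrightarrow> \<not> wA E v"
  proof
    fix v assume v: "v \<in> T" and w: "wA E v"
    then obtain L where L: "L \<noteq> []" "L!0 = v" "set L \<subseteq> S" "wB E (last L)"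
      "\<forall>i. i+1 < length L \<longrightarrow> lk E (L!i) (L!(i+1))" unfolding T_def by blast
    then have "walk (wA E) (wB E) (lk E) L" using w unfolding walk_def by auto
    then show False using nw L(3) unfolding S_def by blast
  qed
  have U_nB: "\<And>u. u \<in> S - T \<Longrightarrow> \<not> wB E u"
  proof
    fix u assume u: "u \<in> S - T" and w: "wB E u"
    have "u \<in> T" unfolding T_def using u w by (intro CollectI conjI exI[of _ "[u]"]) auto
    then show False using u by blast
  qed
  have U_nlk: "\<And>u w. u \<in> S - T \<Longrightarrow> w \<in> T \<Longrightarrow> \<not> lk E u w"
  proof
    fix u w assume u: "u \<in> S - T" and w: "w \<in> T" and l: "lk E u w"
    then obtain L where L: "L \<noteq> []" "L!0 = w" "set L \<subseteq> S" "wB E (last L)"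
      "\<forall>i. i+1 < length L \<longrightarrow> lk E (L!i) (L!(i+1))" unfolding T_def by blast
    have "\<forall>i. i+1 < length (u#L) \<longrightarrow> lk E ((u#L)!i) ((u#L)!(i+1))"
    proof (intro allI impI)
      fix i assume i: "i+1 < length (u#L)"
      show "lk E ((u#L)!i) ((u#L)!(i+1))"
      proof (cases i)
        case 0 then show ?thesis using l L(2) by simp
      next
        case (Suc k) then show ?thesis using L(5) i by simp
      qed
    qed
    then have "u \<in> T" unfolding T_def using u L by (intro CollectI conjI exI[of _ "u#L"]) auto
    then show False using u by blast
  qed
  define X where "X = A \<union> (S - T)"
  define Y where "Y = B \<union> T"
  define X' where "X' = A0 \<union> {u\<in>S - T. NB E u = B0}"
  define Y' where "Y' = B0 \<union> {w\<in>T. NA E w = A0}"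
  have SAB: "S \<inter> A = {}" "S \<inter> B = {}" unfolding S_def by auto
  have edges: "\<forall>x\<in>X. \<forall>y\<in>Y. E x y \<longleftrightarrow> x \<in> X' \<and> y \<in> Y'"
  proof (intro ballI)
    fix x y assume x: "x \<in> X" and y: "y \<in> Y"
    show "E x y \<longleftrightarrow> x \<in> X' \<and> y \<in> Y'"
    proof (cases "x \<in> A")
      case xA: True
      have xX': "x \<in> X' \<longleftrightarrow> x \<in> A0" unfolding X'_def using xA SAB by auto
      show ?thesis
      proof (cases "y \<in> B")
        case True
        have "y \<in> Y' \<longleftrightarrow> y \<in> B0" unfolding Y'_def using True SAB TS by auto
        then show ?thesis using xX' xA True s unfolding str_def by auto
      next
        case False
        then have yT: "y \<in> T" using y unfolding Y_def by auto
        have yY': "y \<in> Y' \<longleftrightarrow> NA E y = A0" unfolding Y'_def using yT SAB TS B0B by auto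
        have c: "NA E y = {} \<or> NA E y = A0" using T_nA[OF yT] unfolding wA_def by blast
        have "E x y \<longleftrightarrow> x \<in> NA E y" unfolding NA_def using xA by auto
        then show ?thesis using c xX' yY' by auto
      qed
    next
      case xnA: False
      then have xU: "x \<in> S - T" using x unfolding X_def by auto
      have xX': "x \<in> X' \<longleftrightarrow> NB E x = B0" unfolding X'_def using xU SAB A0A by auto
      show ?thesis
      proof (cases "y \<in> B")
        case True
        have yY': "y \<in> Y' \<longleftrightarrow> y \<in> B0" unfolding Y'_def using True SAB TS by auto
        have c: "NB E x = {} \<or> NB E x = B0" using U_nB[OF xU] unfolding wB_def by blast
        have "E x y \<longleftrightarrow> y \<in> NB E x" unfolding NB_def using True by auto
        then show ?thesis using c xX' yY' by auto
      next
        case False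
        then have yT: "y \<in> T" using y unfolding Y_def by auto
        have yY': "y \<in> Y' \<longleftrightarrow> NA E y = A0" unfolding Y'_def using yT SAB TS B0B by auto
        have "x \<noteq> y" using xU yT by auto
        moreover have "x \<notin> A \<union> B" "y \<notin> A \<union> B" using xU yT TS unfolding S_def by auto
        ultimately have "lk E x y \<longleftrightarrow> E x y \<noteq> (NB E x = B0 \<and> NA E y = A0)"
          unfolding lk_def using cL[OF s] T_nA[OF yT] U_nB[OF xU] by blast
        then show ?thesis using U_nlk[OF xU yT] xX' yY' by auto
      qed
    qed
  qed
  have XV: "X \<subseteq> V" "Y \<subseteq> V" unfolding X_def Y_def S_def using AV BV TS S_def by auto
  have "card A \<le> card X" using finV XV by (intro card_mono) (auto simp: X_def intro: finite_subset)
  moreover have "card B \<le> card Y" using finV XV by (intro card_mono) (auto simp: Y_def intro: finite_subset)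
  moreover have "X \<inter> Y = {}" unfolding X_def Y_def using disj SAB TS by auto
  moreover have "X \<union> Y = V" unfolding X_def Y_def S_def using AV BV TS S_def by auto
  moreover have "X' \<subseteq> X" "Y' \<subseteq> Y" unfolding X'_def Y'_def X_def Y_def using A0A B0B by auto
  ultimately have "is_split V E X Y" unfolding is_split_def using cA2 cB2 edges by (intro conjI exI[of _ X'] exI[of _ Y']) auto
  then show False using pr unfolding prime_graph_def by blast
qed

end

lemma lc_graph: assumes "graph V F" "c \<in> V" shows "graph V (local_comp F c)"
  using assms unfolding graph_def local_comp_def by auto

lemma le_trans: assumes "locally_equiv V F G" "locally_equiv V E F" shows "locally_equiv V E G"
  using assms by (induction rule: locally_equiv.induct) (auto intro: locally_equiv.step)

lemma le_graph: assumes "locally_equiv V E F" "graph V E" shows "graph V F"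
  using assms by (induction rule: locally_equiv.induct) (auto intro: lc_graph)

lemma le_one: "c \<in> V \<Longrightarrow> locally_equiv V F (local_comp F c)"
  by (rule locally_equiv.step[OF locally_equiv.refl])

lemma splice_nth: "k < length (take i L @ drop j L) \<Longrightarrow> i \<le> j \<Longrightarrow> j \<le> length L \<Longrightarrow>
    (take i L @ drop j L) ! k = (if k < i then L!k else L!(k - i + j))"
  by (auto simp: nth_append min_def add.commute)

lemma walk_splice:
  assumes ij: "i \<le> j" "j \<le> length L" "0 < i \<or> j < length L"
    and st1: "0 < i \<Longrightarrow> st (L!0)" and st2: "i = 0 \<Longrightarrow> st (L!j)"
    and en1: "j < length L \<Longrightarrow> en (L!(length L - 1))" and en2: "j = length L \<Longrightarrow> en (L!(i-1))"
    and l1: "\<And>k. k+1 < i \<Longrightarrow> lk (L!k) (L!(k+1))"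
    and l2: "\<And>k. j \<le> k \<Longrightarrow> k+1 < length L \<Longrightarrow> lk (L!k) (L!(k+1))"
    and l3: "0 < i \<Longrightarrow> j < length L \<Longrightarrow> lk (L!(i-1)) (L!j)"
  shows "walk st en lk (take i L @ drop j L)"
proof -
  let ?M = "take i L @ drop j L"
  have iL: "i \<le> length L" using ij by simp
  have len: "length ?M = i + (length L - j)" using ij by simp
  have ne: "?M \<noteq> []" using ij len by auto
  have nth: "\<And>k. k < length ?M \<Longrightarrow> ?M ! k = (if k < i then L!k else L!(k - i + j))"
    using splice_nth ij by blast
  have s0: "st (?M!0)"
  proof (cases "0 < i")
    case True then show ?thesis using nth[of 0] ne st1 by simp
  next
    case False then have "i = 0" by simp
    then show ?thesis using nth[of 0] ne st2 len ij by auto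
  qed
  have lastM: "last ?M = ?M ! (length ?M - 1)" using ne by (simp add: last_conv_nth)
  have e0: "en (last ?M)"
  proof (cases "j < length L")
    case True
    then have "?M ! (length ?M - 1) = L ! (length L - 1)" using nth[of "length ?M - 1"] len ij ne by auto
    then show ?thesis using lastM en1 True by simp
  next
    case False
    then have jL: "j = length L" using ij by simp
    then have "0 < i" using ij by simp
    then have "?M ! (length ?M - 1) = L ! (i - 1)" using nth[of "length ?M - 1"] len jL by auto
    then show ?thesis using lastM en2 jL by simp
  qed
  have lks: "\<forall>k. k+1 < length ?M \<longrightarrow> lk (?M!k) (?M!(k+1))"
  proof (intro allI impI)
    fix k assume k: "k+1 < length ?M"
    have a: "?M!k = (if k < i then L!k else L!(k - i + j))" using nth k by simp
    have b: "?M!(k+1) = (if k+1 < i then L!(k+1) else L!(k + 1 - i + j))" using nth k by simp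
    show "lk (?M!k) (?M!(k+1))"
    proof (cases "k+1 < i")
      case True then show ?thesis using a b l1 by simp
    next
      case False
      show ?thesis
      proof (cases "k+1 = i")
        case True
        then have "j < length L" using k len by auto
        then show ?thesis using a b l3 True by auto
      next
        case False
        then have "i \<le> k" using \<open>\<not> k+1 < i\<close> by simp
        moreover have "k - i + j + 1 < length L" using k len ij \<open>i \<le> k\<close> by auto
        moreover have "k + 1 - i + j = (k - i + j) + 1" using \<open>i \<le> k\<close> by simp
        ultimately show ?thesis using a b l2[of "k - i + j"] \<open>\<not> k+1 < i\<close> by auto
      qed
    qed
  qed
  show ?thesis unfolding walk_def using ne s0 e0 lks by blast
qed

definition ef :: "(nat\<Rightarrow>bool) \<Rightarrow> (nat\<Rightarrow>bool) \<Rightarrow> nat \<Rightarrow> nat \<Rightarrow> bool" where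
  "ef al be p q = (if p < q then (if q = Suc p then \<not>(be p \<and> al q) else be p \<and> al q)
     else if q < p then (if p = Suc q then \<not>(be q \<and> al p) else be q \<and> al p) else False)"
type_synonym sig = "(nat\<Rightarrow>bool) \<times> (nat\<Rightarrow>bool) \<times> (nat\<Rightarrow>nat\<Rightarrow>bool)"
definition lcI :: "nat \<Rightarrow> sig \<Rightarrow> sig" where
  "lcI i s = (case s of (al,be,e) \<Rightarrow> (\<lambda>k. if k = i then al k else al k \<noteq> (e i k \<and> al i),
     \<lambda>k. if k=i then be k else be k \<noteq> (e i k \<and> be i),
     \<lambda>p q. if p = q then e p q else e p q \<noteq> (e i p \<and> e i q)))"
definition link :: "sig \<Rightarrow> nat \<Rightarrow> nat \<Rightarrow> bool" where
  "link s p q = (case s of (al,be,e) \<Rightarrow> e p q \<noteq> (be p \<and> al q))"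


lemma sd_lemma: assumes "N \<subseteq> A" "A0 \<subseteq> A" "A0 \<noteq> {}" "C = {} \<or> C = A0"
  "N' = {a\<in>A. (a\<in>N) \<noteq> (a\<in>C \<and> t)}"
  shows "(N' \<noteq> {} \<and> N' \<noteq> A0) = (N \<noteq> {} \<and> N \<noteq> A0)"
    and "N = {} \<or> N = A0 \<Longrightarrow> (N' = A0) = ((N = A0) \<noteq> (t \<and> C = A0))"
proof -
  have "(N' \<noteq> {} \<and> N' \<noteq> A0) = (N \<noteq> {} \<and> N \<noteq> A0) \<and>
        ((N = {} \<or> N = A0) \<longrightarrow> (N' = A0) = ((N = A0) \<noteq> (t \<and> C = A0)))"
  proof (cases "t \<and> C = A0")
    case False
    then have "N' = N" using assms by auto
    then show ?thesis using False assms(3,4) by auto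
  next
    case True
    then have N': "N' = {a\<in>A. (a\<in>N) \<noteq> (a\<in>A0)}" using assms by auto
    have e1: "N' = {} \<longleftrightarrow> N = A0" using N' assms(1,2) by auto
    have e2: "N' = A0 \<longleftrightarrow> N = {}" using N' assms(1,2) by auto
    show ?thesis using e1 e2 True assms(3) by auto
  qed
  then show "(N' \<noteq> {} \<and> N' \<noteq> A0) = (N \<noteq> {} \<and> N \<noteq> A0)"
    and "N = {} \<or> N = A0 \<Longrightarrow> (N' = A0) = ((N = A0) \<noteq> (t \<and> C = A0))" by auto
qed

context ABs
begin

definition rep :: "('a \<Rightarrow> 'a \<Rightarrow> bool) \<Rightarrow> (nat \<Rightarrow> 'a) \<Rightarrow> nat \<Rightarrow> sig \<Rightarrow> bool" where
  "rep F v m s \<longleftrightarrow> (case s of (al,be,e) \<Rightarrow>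
     (\<forall>p<m. \<forall>q<m. F (v p) (v q) = e p q) \<and>
     (\<forall>k. 1 \<le> k \<and> k < m \<longrightarrow> \<not> wA F (v k) \<and> (NA F (v k) = A0) = al k) \<and>
     (\<forall>k. k + 1 < m \<longrightarrow> \<not> wB F (v k) \<and> (NB F (v k) = B0) = be k) \<and>
     wA F (v 0) \<and> wB F (v (m - 1)))"

lemma track:
  assumes g: "graph V F" and inj: "inj_on v {..<m}" and out: "\<forall>k<m. v k \<notin> A \<union> B"
    and i: "1 \<le> i" "i + 1 < m" and r: "rep F v m s"
  shows "rep (local_comp F (v i)) v m (lcI i s)"
proof -
  obtain al be e where s: "s = (al, be, e)" by (cases s) auto
  define c where "c = v i"
  define F' where "F' = local_comp F c"
  have sym: "\<And>x y. F x y = F y x" and irr: "\<And>x. \<not> F x x" using g unfolding graph_def by blast+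
  have r_e: "\<And>p q. p < m \<Longrightarrow> q < m \<Longrightarrow> F (v p) (v q) = e p q"
    and r_a: "\<And>k. 1 \<le> k \<Longrightarrow> k < m \<Longrightarrow> \<not> wA F (v k) \<and> (NA F (v k) = A0) = al k"
    and r_b: "\<And>k. k + 1 < m \<Longrightarrow> \<not> wB F (v k) \<and> (NB F (v k) = B0) = be k"
    and r_0: "wA F (v 0)" and r_m: "wB F (v (m - 1))"
    using r unfolding rep_def s by auto
  have im: "i < m" using i by simp
  have cA: "NA F c = {} \<or> NA F c = A0" using r_a[OF i(1) im] unfolding c_def wA_def by blast
  have cB: "NB F c = {} \<or> NB F c = B0" using r_b[OF i(2)] unfolding c_def wB_def by blast
  have cal: "(NA F c = A0) = al i" using r_a[OF i(1) im] unfolding c_def by blast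
  have cbe: "(NB F c = B0) = be i" using r_b[OF i(2)] unfolding c_def by blast
  have Fc: "\<And>k. k < m \<Longrightarrow> F c (v k) = e i k" using r_e im unfolding c_def by blast
  have NA': "\<And>k. k < m \<Longrightarrow> NA F' (v k) = {a\<in>A. (a \<in> NA F (v k)) \<noteq> (a \<in> NA F c \<and> F c (v k))}"
  proof -
    fix k assume k: "k < m"
    have "v k \<notin> A" using out k by auto
    then show "NA F' (v k) = {a\<in>A. (a \<in> NA F (v k)) \<noteq> (a \<in> NA F c \<and> F c (v k))}"
      unfolding NA_def F'_def local_comp_def using sym by auto
  qed
  have NB': "\<And>k. k < m \<Longrightarrow> NB F' (v k) = {b\<in>B. (b \<in> NB F (v k)) \<noteq> (b \<in> NB F c \<and> F c (v k))}"
  proof -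
    fix k assume k: "k < m"
    have "v k \<notin> B" using out k by auto
    then show "NB F' (v k) = {b\<in>B. (b \<in> NB F (v k)) \<noteq> (b \<in> NB F c \<and> F c (v k))}"
      unfolding NB_def F'_def local_comp_def using sym by auto
  qed
  have NAsub: "\<And>x. NA F x \<subseteq> A" and NBsub: "\<And>x. NB F x \<subseteq> B" unfolding NA_def NB_def by auto
  note sdA = sd_lemma[OF NAsub A0A A0ne cA]
  note sdB = sd_lemma[OF NBsub B0B B0ne cB]
  have edges: "\<forall>p<m. \<forall>q<m. F' (v p) (v q) = (if p = q then e p q else e p q \<noteq> (e i p \<and> e i q))"
  proof (intro allI impI)
    fix p q assume p: "p < m" and q: "q < m"
    have "v p = v q \<longleftrightarrow> p = q" using inj p q unfolding inj_on_def by auto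
    then show "F' (v p) (v q) = (if p = q then e p q else e p q \<noteq> (e i p \<and> e i q))"
      unfolding F'_def local_comp_def using Fc p q r_e[OF p q] by auto
  qed
  have al': "\<forall>k. 1 \<le> k \<and> k < m \<longrightarrow> \<not> wA F' (v k) \<and> (NA F' (v k) = A0) = (if k = i then al k else al k \<noteq> (e i k \<and> al i))"
  proof (intro allI impI)
    fix k assume k: "1 \<le> k \<and> k < m"
    have nw: "\<not> wA F (v k)" and ak: "(NA F (v k) = A0) = al k" using r_a k by auto
    have c0: "NA F (v k) = {} \<or> NA F (v k) = A0" using nw unfolding wA_def by blast
    have "\<not> wA F' (v k)" using sdA(1)[OF NA'[of k]] nw k unfolding wA_def by blast
    moreover have "(NA F' (v k) = A0) = ((NA F (v k) = A0) \<noteq> (F c (v k) \<and> NA F c = A0))"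
      using sdA(2)[OF NA'[of k] c0] k by blast
    moreover have "F c (v i) = False" using irr unfolding c_def by simp
    ultimately show "\<not> wA F' (v k) \<and> (NA F' (v k) = A0) = (if k = i then al k else al k \<noteq> (e i k \<and> al i))"
      using ak cal Fc k by (auto simp: c_def)
  qed
  have be': "\<forall>k. k + 1 < m \<longrightarrow> \<not> wB F' (v k) \<and> (NB F' (v k) = B0) = (if k = i then be k else be k \<noteq> (e i k \<and> be i))"
  proof (intro allI impI)
    fix k assume k: "k + 1 < m"
    have nw: "\<not> wB F (v k)" and bk: "(NB F (v k) = B0) = be k" using r_b k by auto
    have c0: "NB F (v k) = {} \<or> NB F (v k) = B0" using nw unfolding wB_def by blast
    have "\<not> wB F' (v k)" using sdB(1)[OF NB'[of k]] nw k unfolding wB_def by auto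
    moreover have "(NB F' (v k) = B0) = ((NB F (v k) = B0) \<noteq> (F c (v k) \<and> NB F c = B0))"
      using sdB(2)[OF NB'[of k] c0] k by auto
    moreover have "F c (v i) = False" using irr unfolding c_def by simp
    ultimately show "\<not> wB F' (v k) \<and> (NB F' (v k) = B0) = (if k = i then be k else be k \<noteq> (e i k \<and> be i))"
      using bk cbe Fc k by (auto simp: c_def)
  qed
  have w0: "wA F' (v 0)" using sdA(1)[OF NA'[of 0]] r_0 im unfolding wA_def by auto
  have wm: "wB F' (v (m - 1))" using sdB(1)[OF NB'[of "m - 1"]] r_m im unfolding wB_def by auto
  show ?thesis unfolding rep_def s lcI_def F'_def[symmetric] c_def[symmetric]
    using edges al' be' w0 wm by (simp add: F'_def c_def)
qed

end

lemma keep1: assumes "\<forall>x\<in>U. \<forall>y\<in>U. F c x \<and> F c y \<longrightarrow> x = y"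
  shows "\<forall>x\<in>U. \<forall>y\<in>U. local_comp F c x y = F x y"
  using assms unfolding local_comp_def by auto

lemma keep2: assumes "\<not> F c d" "c \<notin> U" "d \<notin> U" "\<forall>x\<in>U. F c x = F d x"
  shows "\<forall>x\<in>U. \<forall>y\<in>U. local_comp (local_comp F c) d x y = F x y"
proof (intro ballI)
  fix x y assume x: "x \<in> U" and y: "y \<in> U"
  have dx: "local_comp F c d x = F d x" "local_comp F c d y = F d y"
    using assms(1) unfolding local_comp_def by auto
  show "local_comp (local_comp F c) d x y = F x y"
    using dx assms(4) x y unfolding local_comp_def by (auto split: if_splits)
qed

lemma keep3: assumes irr: "\<And>x. \<not> F x x" and sym: "\<And>x y. F x y = F y x"
  and "F c d" "c \<noteq> d" "c \<notin> U" "d \<notin> U" "\<forall>x\<in>U. F c x = F d x"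
  shows "\<forall>x\<in>U. \<forall>y\<in>U. local_comp (local_comp (local_comp F c) d) c x y = F x y"
proof (intro ballI)
  fix x y assume x: "x \<in> U" and y: "y \<in> U"
  define F1 where "F1 = local_comp F c"
  define F2 where "F2 = local_comp F1 d"
  have F1d: "\<And>z. z \<in> U \<Longrightarrow> \<not> F1 d z"
    using assms(3-7) irr unfolding F1_def local_comp_def by (auto simp: sym)
  have F1xy: "F1 x y = (if x \<noteq> y \<and> F c x \<and> F c y then \<not> F x y else F x y)"
    unfolding F1_def local_comp_def by simp
  have F2xy: "F2 x y = F1 x y" using F1d x y unfolding F2_def local_comp_def by auto
  have F1c: "\<And>z. F1 c z = F c z" using irr unfolding F1_def local_comp_def by auto
  have F1dc: "F1 d c" using assms(3) irr sym unfolding F1_def local_comp_def by auto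
  have F2c: "\<And>z. z \<in> U \<Longrightarrow> F2 c z = F c z"
    using F1d F1c unfolding F2_def local_comp_def by (auto simp: sym)
  show "local_comp F2 c x y = F x y"
    using F2xy F1xy F2c x y unfolding local_comp_def by auto
qed

context ABs
begin

lemma rep_link:
  assumes r: "rep F v m s" and s: "str F" and inj: "inj_on v {..<m}" and out: "\<forall>k<m. v k \<notin> A \<union> B"
    and pq: "p < q" "q < m"
  shows "lk F (v p) (v q) \<longleftrightarrow> link s p q"
proof -
  obtain al be e where s3: "s = (al, be, e)" by (cases s) auto
  have r_e: "F (v p) (v q) = e p q" and r_a: "\<not> wA F (v q) \<and> (NA F (v q) = A0) = al q"
    and r_b: "\<not> wB F (v p) \<and> (NB F (v p) = B0) = be p"
    using r pq unfolding rep_def s3 by auto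
  have ne: "v p \<noteq> v q" using inj pq unfolding inj_on_def by auto
  have "lk F (v p) (v q) \<longleftrightarrow> F (v p) (v q) \<noteq> (NB F (v p) = B0 \<and> NA F (v q) = A0)"
    unfolding lk_def using cL[OF s] out pq ne r_a r_b by auto
  then show ?thesis using r_e r_a r_b unfolding link_def s3 by auto
qed

lemma init_rep:
  assumes g: "graph V F" and s: "str F" and m: "m = length vs"
    and w: "walk (wA F) (wB F) (lk F) vs" and inj: "inj_on ((!) vs) {..<m}"
    and out: "\<forall>k<m. vs ! k \<notin> A \<union> B"
    and F1: "\<forall>k. 1 \<le> k \<and> k < m \<longrightarrow> \<not> wA F (vs!k)"
    and F2: "\<forall>k. k + 1 < m \<longrightarrow> \<not> wB F (vs!k)"
    and F3: "\<forall>p q. p + 1 < q \<and> q < m \<longrightarrow> \<not> lk F (vs!p) (vs!q)"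
  shows "rep F ((!) vs) m (\<lambda>k. NA F (vs!k) = A0, \<lambda>k. NB F (vs!k) = B0,
            ef (\<lambda>k. NA F (vs!k) = A0) (\<lambda>k. NB F (vs!k) = B0))"
proof -
  define al where "al = (\<lambda>k. NA F (vs!k) = A0)"
  define be where "be = (\<lambda>k. NB F (vs!k) = B0)"
  have sym: "\<And>x y. F x y = F y x" and irr: "\<And>x. \<not> F x x" using g unfolding graph_def by blast+
  have ne: "vs \<noteq> []" and w0: "wA F (vs!0)" and wl: "wB F (last vs)"
    and cons: "\<And>i. i + 1 < m \<Longrightarrow> lk F (vs!i) (vs!(i+1))" using w m unfolding walk_def by auto
  have lastv: "last vs = vs ! (m - 1)" using ne m by (simp add: last_conv_nth)
  have lt: "\<And>p q. p < q \<Longrightarrow> q < m \<Longrightarrow> F (vs!p) (vs!q) = ef al be p q"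
  proof -
    fix p q assume pq: "p < q" "q < m"
    have neq: "vs!p \<noteq> vs!q" using inj pq unfolding inj_on_def by auto
    have c: "lk F (vs!p) (vs!q) \<longleftrightarrow> F (vs!p) (vs!q) \<noteq> (be p \<and> al q)"
      unfolding lk_def al_def be_def using cL[OF s] out pq neq F1 F2 by auto
    show "F (vs!p) (vs!q) = ef al be p q"
    proof (cases "q = Suc p")
      case True then show ?thesis using c cons[of p] pq unfolding ef_def by auto
    next
      case False then show ?thesis using c F3 pq unfolding ef_def by auto
    qed
  qed
  have edges: "\<forall>p<m. \<forall>q<m. F (vs!p) (vs!q) = ef al be p q"
  proof (intro allI impI)
    fix p q assume p: "p < m" and q: "q < m"
    consider "p < q" | "q < p" | "p = q" by arith
    then show "F (vs!p) (vs!q) = ef al be p q"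
    proof cases
      case 1 then show ?thesis using lt q by simp
    next
      case 2 then have "F (vs!q) (vs!p) = ef al be q p" using lt p by simp
      then show ?thesis using 2 sym unfolding ef_def by auto
    next
      case 3 then show ?thesis using irr unfolding ef_def by simp
    qed
  qed
  show ?thesis unfolding rep_def al_def[symmetric] be_def[symmetric]
    using edges F1 F2 w0 wl lastv by (auto simp: al_def be_def)
qed

lemma shortest_facts:
  assumes w: "walk (wA F) (wB F) (lk F) vs" and S: "set vs \<subseteq> S"
    and mn: "\<forall>L. set L \<subseteq> S \<longrightarrow> walk (wA F) (wB F) (lk F) L \<longrightarrow> length vs \<le> length L"
  shows "inj_on ((!) vs) {..<length vs}"
    and "\<forall>k. 1 \<le> k \<and> k < length vs \<longrightarrow> \<not> wA F (vs!k)"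
    and "\<forall>k. k + 1 < length vs \<longrightarrow> \<not> wB F (vs!k)"
    and "\<forall>p q. p + 1 < q \<and> q < length vs \<longrightarrow> \<not> lk F (vs!p) (vs!q)"
proof -
  let ?m = "length vs"
  have ne: "vs \<noteq> []" and w0: "wA F (vs!0)" and wl: "wB F (last vs)"
    and cons: "\<And>i. i + 1 < ?m \<Longrightarrow> lk F (vs!i) (vs!(i+1))" using w unfolding walk_def by auto
  have lastv: "last vs = vs ! (?m - 1)" using ne by (simp add: last_conv_nth)
  have short: "\<And>i j. walk (wA F) (wB F) (lk F) (take i vs @ drop j vs) \<Longrightarrow> i + (?m - j) < ?m \<Longrightarrow> j \<le> ?m \<Longrightarrow> False"
  proof -
    fix i j assume a: "walk (wA F) (wB F) (lk F) (take i vs @ drop j vs)" "i + (?m - j) < ?m" "j \<le> ?m"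
    have "set (take i vs @ drop j vs) \<subseteq> S" using S set_take_subset set_drop_subset by fastforce
    then have "?m \<le> length (take i vs @ drop j vs)" using mn a(1) by blast
    moreover have "length (take i vs @ drop j vs) \<le> i + (?m - j)" by simp
    ultimately show False using a(2) by simp
  qed
  show "inj_on ((!) vs) {..<?m}"
  proof (rule inj_onI, rule ccontr)
    fix x y assume x: "x \<in> {..<?m}" and y: "y \<in> {..<?m}" and eq: "vs!x = vs!y" and nxy: "x \<noteq> y"
    have key: "\<And>i j. i < j \<Longrightarrow> j < ?m \<Longrightarrow> vs!i = vs!j \<Longrightarrow> False"
    proof -
      fix i j assume ij: "i < j" "j < ?m" "vs!i = vs!j"
      have l3: "0 < i \<Longrightarrow> lk F (vs!(i-1)) (vs!j)" using cons[of "i-1"] ij by (cases i) auto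
      have "walk (wA F) (wB F) (lk F) (take i vs @ drop j vs)"
        by (rule walk_splice) (use ij l3 w0 wl lastv cons in \<open>auto\<close>)
      then show False using ij by (intro short[of i j]) auto
    qed
    show False using key[of x y] key[of y x] x y eq nxy by (cases "x < y") auto
  qed
  show "\<forall>k. 1 \<le> k \<and> k < ?m \<longrightarrow> \<not> wA F (vs!k)"
  proof (intro allI impI notI)
    fix k assume k: "1 \<le> k \<and> k < ?m" and wk: "wA F (vs!k)"
    have "walk (wA F) (wB F) (lk F) (take 0 vs @ drop k vs)"
      by (rule walk_splice) (use k wk wl lastv cons in \<open>auto\<close>)
    then show False using k by (intro short[of 0 k]) auto
  qed
  show "\<forall>k. k + 1 < ?m \<longrightarrow> \<not> wB F (vs!k)"
  proof (intro allI impI notI)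
    fix k assume k: "k + 1 < ?m" and wk: "wB F (vs!k)"
    have "walk (wA F) (wB F) (lk F) (take (k+1) vs @ drop ?m vs)"
      by (rule walk_splice) (use k wk w0 cons in \<open>auto\<close>)
    then show False using k by (intro short[of "k+1" ?m]) auto
  qed
  show "\<forall>p q. p + 1 < q \<and> q < ?m \<longrightarrow> \<not> lk F (vs!p) (vs!q)"
  proof (intro allI impI notI)
    fix p q assume pq: "p + 1 < q \<and> q < ?m" and l: "lk F (vs!p) (vs!q)"
    have "walk (wA F) (wB F) (lk F) (take (p+1) vs @ drop q vs)"
      by (rule walk_splice) (use pq l w0 wl lastv cons in \<open>auto\<close>)
    then show False using pq by (intro short[of "p+1" q]) auto
  qed
qed

end
lemma L00: assumes "1 \<le> i" "\<not> al i" "\<not> be i"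
  "(Suc p < i \<and> q = Suc p) \<or> (p = i - 1 \<and> q = Suc i) \<or> (i < p \<and> q = Suc p)"
  shows "link (lcI i (al,be,ef al be)) p q"
  using assms(4) apply (elim disjE conjE)
  using assms by (auto simp: link_def lcI_def ef_def)

lemma L10: assumes "1 \<le> i" "al i" "\<not> be i"
  "(Suc p < i \<and> q = Suc p) \<or> (p = i - 1 \<and> q = Suc i) \<or> (i < p \<and> q = Suc p)"
  shows "link (lcI i (al,be,ef al be)) p q"
  using assms(4) apply (elim disjE conjE)
  using assms by (auto simp: link_def lcI_def ef_def)

lemma L01: assumes "1 \<le> i" "\<not>al i" "be i"
  "(Suc p < i \<and> q = Suc p) \<or> (p = i - 1 \<and> q = Suc i) \<or> (i < p \<and> q = Suc p)"
  shows "link (lcI i (al,be,ef al be)) p q"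
  using assms(4) apply (elim disjE conjE)
  using assms by (auto simp: link_def lcI_def ef_def)

lemma LLn: assumes "1 \<le> i" "Suc i < j" "al i = al j" "be i = be j" "al i \<noteq> be i"
  "(Suc p < i \<and> q = Suc p) \<or> (p = i - 1 \<and> q = Suc i) \<or> (i < p \<and> q = Suc p)"
  shows "link (lcI j (lcI i (al,be,ef al be))) p q"
  using assms(6) apply (elim disjE conjE)
  using assms by (auto simp: link_def lcI_def ef_def)

lemma Pn: assumes "1 \<le> i" "Suc i < j" "al i" "be i" "al j" "be j"
  "(Suc p < i \<and> q = Suc p) \<or> (p = i - 1 \<and> q = Suc i) \<or> (i < p \<and> q = Suc p)"
  shows "link (lcI i (lcI j (lcI i (al,be,ef al be)))) p q"
  using assms(7) apply (elim disjE conjE)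
  using assms by (auto simp: link_def lcI_def ef_def)

lemma LLc: assumes "1 \<le> i" "al i" "be i" "al (Suc i)" "be (Suc i)"
  "(Suc p < i \<and> q = Suc p) \<or> (p = i - 1 \<and> q = i+2) \<or> (i+1 < p \<and> q = Suc p)"
  shows "link (lcI (Suc i) (lcI i (al,be,ef al be))) p q"
  using assms(6) apply (elim disjE conjE)
  using assms by (auto simp: link_def lcI_def ef_def)

lemma Pc: assumes "1 \<le> i" "al i = al (Suc i)" "be i = be (Suc i)" "al i \<noteq> be i"
  "(Suc p < i \<and> q = Suc p) \<or> (p = i - 1 \<and> q = i+2) \<or> (i+1 < p \<and> q = Suc p)"
  shows "link (lcI i (lcI (Suc i) (lcI i (al,be,ef al be)))) p q"
  using assms(5) apply (elim disjE conjE)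
  using assms by (auto simp: link_def lcI_def ef_def)


context ABs
begin

lemma str_agree: assumes "str F" "\<forall>x\<in>A \<union> B. \<forall>y\<in>A \<union> B. F' x y = F x y" shows "str F'"
  using assms unfolding str_def by auto

lemma conclude:
  assumes g: "graph V F" and s: "str F" and inj: "inj_on ((!) vs) {..<length vs}"
    and out: "\<forall>k<length vs. vs!k \<notin> A \<union> B" and S: "set vs \<subseteq> V - (A \<union> B)"
    and le: "locally_equiv V F F2" and ag: "\<forall>x\<in>A \<union> B. \<forall>y\<in>A \<union> B. F2 x y = F x y"
    and r: "rep F2 ((!) vs) (length vs) s2"
    and ij: "1 \<le> i" "i < j" "j < length vs"
    and lnk: "\<forall>p q. ((Suc p < i \<and> q = Suc p) \<or> (p = i - 1 \<and> q = j) \<or> (j \<le> p \<and> q = Suc p)) \<longrightarrow> link s2 p q"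
  shows "\<exists>F2 L2. locally_equiv V F F2 \<and> (\<forall>x\<in>A \<union> B. \<forall>y\<in>A \<union> B. F2 x y = F x y) \<and>
     set L2 \<subseteq> V - (A \<union> B) \<and> walk (wA F2) (wB F2) (lk F2) L2 \<and> length L2 < length vs"
proof -
  let ?m = "length vs"
  have s2: "str F2" using str_agree[OF s ag] .
  obtain al be e where s3: "s2 = (al, be, e)" by (cases s2) auto
  have w0: "wA F2 (vs!0)" and wm: "wB F2 (vs!(?m - 1))" using r unfolding rep_def s3 by auto
  have L: "\<And>p q. p < q \<Longrightarrow> q < ?m \<Longrightarrow> link s2 p q \<Longrightarrow> lk F2 (vs!p) (vs!q)"
    using rep_link[OF r s2 inj out] by blast
  have "walk (wA F2) (wB F2) (lk F2) (take i vs @ drop j vs)"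
  proof (rule walk_splice)
    show "\<And>k. k + 1 < i \<Longrightarrow> lk F2 (vs!k) (vs!(k+1))" using L lnk ij by auto
    show "\<And>k. j \<le> k \<Longrightarrow> k + 1 < ?m \<Longrightarrow> lk F2 (vs!k) (vs!(k+1))" using L lnk ij by auto
    show "0 < i \<Longrightarrow> j < ?m \<Longrightarrow> lk F2 (vs!(i-1)) (vs!j)" using L lnk ij by auto
  qed (use ij w0 wm in auto)
  moreover have "set (take i vs @ drop j vs) \<subseteq> V - (A \<union> B)"
    using S set_take_subset set_drop_subset by fastforce
  moreover have "length (take i vs @ drop j vs) < ?m" using ij by simp
  ultimately show ?thesis using le ag by blast
qed

end



context ABs
begin

lemma same_nb:
  assumes g: "graph V F" and r: "rep F v m (al, be, e)" and i: "1 \<le> i" "i + 1 < m" and j: "1 \<le> j" "j + 1 < m"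
    and eq: "al i = al j" "be i = be j"
  shows "\<forall>x\<in>A \<union> B. F (v i) x = F (v j) x"
proof -
  have sym: "\<And>x y. F x y = F y x" using g unfolding graph_def by blast
  have ai: "\<not> wA F (v i)" "(NA F (v i) = A0) = al i" "\<not> wB F (v i)" "(NB F (v i) = B0) = be i"
    and aj: "\<not> wA F (v j)" "(NA F (v j) = A0) = al j" "\<not> wB F (v j)" "(NB F (v j) = B0) = be j"
    using r i j unfolding rep_def by auto
  have "NA F (v i) = NA F (v j)" using ai aj eq unfolding wA_def by metis
  moreover have "NB F (v i) = NB F (v j)" using ai aj eq unfolding wB_def by metis
  ultimately show ?thesis unfolding NA_def NB_def using sym by blast
qed

lemma nb_cases:
  assumes g: "graph V F" and r: "rep F v m (al, be, e)" and i: "1 \<le> i" "i + 1 < m"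
  shows "\<And>x. x \<in> A \<Longrightarrow> F (v i) x \<longleftrightarrow> al i \<and> x \<in> A0"
    and "\<And>x. x \<in> B \<Longrightarrow> F (v i) x \<longleftrightarrow> be i \<and> x \<in> B0"
proof -
  have sym: "\<And>x y. F x y = F y x" using g unfolding graph_def by blast
  have ai: "\<not> wA F (v i)" "(NA F (v i) = A0) = al i" "\<not> wB F (v i)" "(NB F (v i) = B0) = be i"
    using r i unfolding rep_def by auto
  have "NA F (v i) = (if al i then A0 else {})" using ai unfolding wA_def by auto
  then show "\<And>x. x \<in> A \<Longrightarrow> F (v i) x \<longleftrightarrow> al i \<and> x \<in> A0"
    unfolding NA_def using sym A0A by (auto split: if_splits)
  have "NB F (v i) = (if be i then B0 else {})" using ai unfolding wB_def by auto
  then show "\<And>x. x \<in> B \<Longrightarrow> F (v i) x \<longleftrightarrow> be i \<and> x \<in> B0"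
    unfolding NB_def using B0B by (auto split: if_splits)
qed


lemma pigeon4:
  assumes "a1 \<or> b1" "a2 \<or> b2" "a3 \<or> b3" "a4 \<or> b4"
  shows "(a1 = a2 \<and> b1 = b2) \<or> (a1 = a3 \<and> b1 = b3) \<or> (a1 = a4 \<and> b1 = b4) \<or>
         (a2 = a3 \<and> b2 = b3) \<or> (a2 = a4 \<and> b2 = b4) \<or> (a3 = a4 \<and> b3 = b4)"
  using assms by blast

lemma choose_case:
  fixes al be :: "nat \<Rightarrow> bool" and x y :: bool and m :: nat
  assumes big: "m > (if x \<and> y then 3 else if x \<or> y then 4 else 6)"
  shows "(\<exists>i. 1 \<le> i \<and> i+1 < m \<and> ((\<not>al i \<and> \<not>be i) \<or> (x \<and> al i \<and> \<not>be i) \<or> (y \<and> \<not>al i \<and> be i))) \<or>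
         (\<exists>i j. 1 \<le> i \<and> i < j \<and> j+1 < m \<and> al i = al j \<and> be i = be j \<and> (al i \<or> be i))"
proof (rule ccontr)
  assume n: "\<not> ?thesis"
  have T: "\<And>k. 1 \<le> k \<Longrightarrow> k+1 < m \<Longrightarrow> (al k \<or> be k) \<and> (x \<longrightarrow> al k \<longrightarrow> be k) \<and> (y \<longrightarrow> be k \<longrightarrow> al k)"
    using n by blast
  have np: "\<And>i j. 1 \<le> i \<Longrightarrow> i < j \<Longrightarrow> j+1 < m \<Longrightarrow> \<not> (al i = al j \<and> be i = be j)"
  proof
    fix i j assume h: "1 \<le> i" "i < j" "j+1 < m" "al i = al j \<and> be i = be j"
    have "al i \<or> be i" using T[of i] h by simp
    then show False using n h by blast
  qed
  have m3: "3 < m" using big by (auto split: if_splits)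
  have T1: "(al 1 \<or> be 1) \<and> (x \<longrightarrow> al 1 \<longrightarrow> be 1) \<and> (y \<longrightarrow> be 1 \<longrightarrow> al 1)" using T[of 1] m3 by simp
  have T2: "(al 2 \<or> be 2) \<and> (x \<longrightarrow> al 2 \<longrightarrow> be 2) \<and> (y \<longrightarrow> be 2 \<longrightarrow> al 2)" using T[of 2] m3 by simp
  have D12: "\<not> (al 1 = al 2 \<and> be 1 = be 2)" using np[of 1 2] m3 by simp
  show False
  proof (cases "x \<and> y")
    case xy: True
    show False using T1 T2 D12 xy by blast
  next
    case F: False
    have m4: "4 < m" using big F by (auto split: if_splits)
    have T3: "(al 3 \<or> be 3) \<and> (x \<longrightarrow> al 3 \<longrightarrow> be 3) \<and> (y \<longrightarrow> be 3 \<longrightarrow> al 3)" using T[of 3] m4 by simp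
    have D13: "\<not> (al 1 = al 3 \<and> be 1 = be 3)" using np[of 1 3] m4 by simp
    have D23: "\<not> (al 2 = al 3 \<and> be 2 = be 3)" using np[of 2 3] m4 by simp
    show False
    proof (cases "x \<or> y")
      case xy: True
      show False using T1 T2 T3 D12 D13 D23 xy by blast
    next
      case nxy: False
      have m6: "6 < m" using big F nxy by (auto split: if_splits)
      have T4: "al 4 \<or> be 4" using T[of 4] m6 by simp
      have D14: "\<not> (al 1 = al 4 \<and> be 1 = be 4)" using np[of 1 4] m6 by simp
      have D24: "\<not> (al 2 = al 4 \<and> be 2 = be 4)" using np[of 2 4] m6 by simp
      have D34: "\<not> (al 3 = al 4 \<and> be 3 = be 4)" using np[of 3 4] m6 by simp
      show False using T1 T2 T3 T4 D12 D13 D23 D14 D24 D34 by blast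
    qed
  qed
qed

lemma shorten:
  assumes g: "graph V F" and s: "str F" and S: "set vs \<subseteq> V - (A \<union> B)"
    and w: "walk (wA F) (wB F) (lk F) vs"
    and mn: "\<forall>L. set L \<subseteq> V - (A \<union> B) \<longrightarrow> walk (wA F) (wB F) (lk F) L \<longrightarrow> length vs \<le> length L"
    and big: "length vs > (if card A0 = 1 \<and> card B0 = 1 then 3 else if card A0 = 1 \<or> card B0 = 1 then 4 else 6)"
  shows "\<exists>F2 L2. locally_equiv V F F2 \<and> (\<forall>x\<in>A \<union> B. \<forall>y\<in>A \<union> B. F2 x y = F x y) \<and>
     set L2 \<subseteq> V - (A \<union> B) \<and> walk (wA F2) (wB F2) (lk F2) L2 \<and> length L2 < length vs"
proof -
  let ?m = "length vs"
  let ?goal = "\<exists>F2 L2. locally_equiv V F F2 \<and> (\<forall>x\<in>A \<union> B. \<forall>y\<in>A \<union> B. F2 x y = F x y) \<and>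
     set L2 \<subseteq> V - (A \<union> B) \<and> walk (wA F2) (wB F2) (lk F2) L2 \<and> length L2 < length vs"
  note sf = shortest_facts[OF w S mn]
  have out: "\<forall>k<?m. vs!k \<notin> A \<union> B" and vV: "\<And>k. k < ?m \<Longrightarrow> vs!k \<in> V"
    using S nth_mem by blast+
  have sym: "\<And>x y. F x y = F y x" and irr: "\<And>x. \<not> F x x" using g unfolding graph_def by blast+
  define al where "al = (\<lambda>k. NA F (vs!k) = A0)"
  define be where "be = (\<lambda>k. NB F (vs!k) = B0)"
  define s0 where "s0 = (al, be, ef al be)"
  have r0: "rep F ((!) vs) ?m s0"
    unfolding s0_def al_def be_def using init_rep[OF g s HOL.refl w sf(1) out sf(2) sf(3) sf(4)] .
  have edge: "\<And>p q. p < ?m \<Longrightarrow> q < ?m \<Longrightarrow> F (vs!p) (vs!q) = ef al be p q"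
    using r0 unfolding rep_def s0_def by auto
  have inj: "\<And>p q. p < ?m \<Longrightarrow> q < ?m \<Longrightarrow> vs!p = vs!q \<longleftrightarrow> p = q"
    using sf(1) unfolding inj_on_def by auto
  note concl = conclude[OF g s sf(1) out S]
  note trk = track[OF _ sf(1) out]
  have single: "?goal" if i: "1 \<le> i" "i + 1 < ?m"
     and c: "(\<not> al i \<and> \<not> be i) \<or> (card A0 = 1 \<and> al i \<and> \<not> be i) \<or> (card B0 = 1 \<and> \<not> al i \<and> be i)" for i
  proof -
    define F2 where "F2 = local_comp F (vs!i)"
    have im: "i < ?m" using i by simp
    have r2: "rep F2 ((!) vs) ?m (lcI i s0)" unfolding F2_def using trk[OF g i r0] .
    have nbA: "\<And>x. x \<in> A \<Longrightarrow> F (vs!i) x \<longleftrightarrow> al i \<and> x \<in> A0"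
      and nbB: "\<And>x. x \<in> B \<Longrightarrow> F (vs!i) x \<longleftrightarrow> be i \<and> x \<in> B0"
      using nb_cases[OF g r0[unfolded s0_def] i] by auto
    have one: "\<forall>x\<in>A \<union> B. \<forall>y\<in>A \<union> B. F (vs!i) x \<and> F (vs!i) y \<longrightarrow> x = y"
    proof (intro ballI impI)
      fix x y assume x: "x \<in> A \<union> B" and y: "y \<in> A \<union> B" and xy: "F (vs!i) x \<and> F (vs!i) y"
      have "x \<in> A0 \<and> y \<in> A0 \<and> card A0 = 1 \<or> x \<in> B0 \<and> y \<in> B0 \<and> card B0 = 1"
        using c x y xy nbA nbB by auto
      then show "x = y" by (metis card_1_singletonE singletonD)
    qed
    have ag: "\<forall>x\<in>A \<union> B. \<forall>y\<in>A \<union> B. F2 x y = F x y" unfolding F2_def by (rule keep1[where F=F and c="vs!i", OF one])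
    have le: "locally_equiv V F F2" unfolding F2_def using le_one vV[OF im] .
    have lnk: "\<forall>p q. ((Suc p < i \<and> q = Suc p) \<or> (p = i - 1 \<and> q = Suc i) \<or> (Suc i \<le> p \<and> q = Suc p)) \<longrightarrow> link (lcI i s0) p q"
    proof (intro allI impI)
      fix p q assume pq: "(Suc p < i \<and> q = Suc p) \<or> (p = i - 1 \<and> q = Suc i) \<or> (Suc i \<le> p \<and> q = Suc p)"
      then have pq': "(Suc p < i \<and> q = Suc p) \<or> (p = i - 1 \<and> q = Suc i) \<or> (i < p \<and> q = Suc p)" by auto
      show "link (lcI i s0) p q"
      proof (cases "al i")
        case True then show ?thesis unfolding s0_def using c by (intro L10[OF i(1) _ _ pq']) auto
      next
        case False then show ?thesis unfolding s0_def
          using c by (cases "be i") (auto intro: L00[OF i(1) _ _ pq'] L01[OF i(1) _ _ pq'])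
      qed
    qed
    show ?thesis by (rule concl[OF le ag r2 i(1) _ _ lnk]) (use i in auto)
  qed
  have pair: "?goal" if ij: "1 \<le> i" "i < j" "j + 1 < ?m" and eq: "al i = al j" "be i = be j"
     and nz: "al i \<or> be i" for i j
  proof -
    have im: "i < ?m" "i + 1 < ?m" and jm: "j < ?m" "1 \<le> j" using ij by auto
    define c where "c = vs!i"
    define d where "d = vs!j"
    have cd: "c \<noteq> d" using inj[of i j] ij unfolding c_def d_def by auto
    have cU: "c \<notin> A \<union> B" "d \<notin> A \<union> B" using out im jm unfolding c_def d_def by auto
    have same: "\<forall>x\<in>A \<union> B. F c x = F d x"
      unfolding c_def d_def using same_nb[OF g r0[unfolded s0_def] ij(1) im(2) jm(2) ij(3) eq] .
    have Fcd: "F c d = ef al be i j" unfolding c_def d_def using edge im jm by auto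
    have g1: "graph V (local_comp F c)" using lc_graph[OF g] vV im unfolding c_def by auto
    have r1: "rep (local_comp F c) ((!) vs) ?m (lcI i s0)" unfolding c_def using trk[OF g ij(1) im(2) r0] .
    have g2: "graph V (local_comp (local_comp F c) d)" using lc_graph[OF g1] vV jm unfolding d_def by auto
    have r2: "rep (local_comp (local_comp F c) d) ((!) vs) ?m (lcI j (lcI i s0))"
      unfolding d_def using trk[OF g1 jm(2) ij(3) r1] by (simp add: d_def)
    have r2': "rep (local_comp (local_comp F c) d) ((!) vs) ?m (lcI (Suc i) (lcI i s0))" if "j = Suc i"
      using r2 that by simp
    have r3: "rep (local_comp (local_comp (local_comp F c) d) c) ((!) vs) ?m (lcI i (lcI j (lcI i s0)))"
      unfolding c_def using trk[OF g2 ij(1) im(2) r2] by (simp add: c_def)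
    have le2: "locally_equiv V F (local_comp (local_comp F c) d)"
      using vV im jm unfolding c_def d_def by (intro locally_equiv.step[OF locally_equiv.step[OF locally_equiv.refl]]) auto
    have le3: "locally_equiv V F (local_comp (local_comp (local_comp F c) d) c)"
      using vV im jm unfolding c_def d_def
      by (intro locally_equiv.step[OF locally_equiv.step[OF locally_equiv.step[OF locally_equiv.refl]]]) auto
    consider (cLLc) "j = Suc i" "al i" "be i" | (cPc) "j = Suc i" "al i \<noteq> be i"
      | (cPn) "Suc i < j" "al i" "be i" | (cLLn) "Suc i < j" "al i \<noteq> be i"
      using ij nz by (cases "j = Suc i") auto
    then show ?thesis
    proof cases
      case cLLc
      have "\<not> F c d" using Fcd cLLc eq unfolding ef_def by auto
      then have ag: "\<forall>x\<in>A \<union> B. \<forall>y\<in>A \<union> B. local_comp (local_comp F c) d x y = F x y"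
        by (rule keep2[OF _ cU same])
      have lnk: "\<forall>p q. ((Suc p < i \<and> q = Suc p) \<or> (p = i - 1 \<and> q = Suc (Suc i)) \<or> (Suc (Suc i) \<le> p \<and> q = Suc p)) \<longrightarrow> link (lcI (Suc i) (lcI i s0)) p q"
      proof (intro allI impI)
        fix p q assume pq: "(Suc p < i \<and> q = Suc p) \<or> (p = i - 1 \<and> q = Suc (Suc i)) \<or> (Suc (Suc i) \<le> p \<and> q = Suc p)"
        then have pq': "(Suc p < i \<and> q = Suc p) \<or> (p = i - 1 \<and> q = i + 2) \<or> (i + 1 < p \<and> q = Suc p)" by auto
        show "link (lcI (Suc i) (lcI i s0)) p q" unfolding s0_def
          by (rule LLc) (use cLLc eq pq' ij in auto)
      qed
      show ?thesis by (rule concl[OF le2 ag r2'[OF cLLc(1)] ij(1) _ _ lnk]) (use ij cLLc in auto)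
    next
      case cPc
      have "F c d" using Fcd cPc eq unfolding ef_def by auto
      then have ag: "\<forall>x\<in>A \<union> B. \<forall>y\<in>A \<union> B. local_comp (local_comp (local_comp F c) d) c x y = F x y"
        by (rule keep3[OF irr sym _ cd cU same])
      have r3': "rep (local_comp (local_comp (local_comp F c) d) c) ((!) vs) ?m (lcI i (lcI (Suc i) (lcI i s0)))"
        using r3 cPc by simp
      have lnk: "\<forall>p q. ((Suc p < i \<and> q = Suc p) \<or> (p = i - 1 \<and> q = Suc (Suc i)) \<or> (Suc (Suc i) \<le> p \<and> q = Suc p)) \<longrightarrow> link (lcI i (lcI (Suc i) (lcI i s0))) p q"
      proof (intro allI impI)
        fix p q assume pq: "(Suc p < i \<and> q = Suc p) \<or> (p = i - 1 \<and> q = Suc (Suc i)) \<or> (Suc (Suc i) \<le> p \<and> q = Suc p)"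
        then have pq': "(Suc p < i \<and> q = Suc p) \<or> (p = i - 1 \<and> q = i + 2) \<or> (i + 1 < p \<and> q = Suc p)" by auto
        show "link (lcI i (lcI (Suc i) (lcI i s0))) p q" unfolding s0_def
          by (rule Pc) (use cPc eq pq' ij in auto)
      qed
      show ?thesis by (rule concl[OF le3 ag r3' ij(1) _ _ lnk]) (use ij cPc in auto)
    next
      case cPn
      have "F c d" using Fcd cPn eq ij unfolding ef_def by auto
      then have ag: "\<forall>x\<in>A \<union> B. \<forall>y\<in>A \<union> B. local_comp (local_comp (local_comp F c) d) c x y = F x y"
        by (rule keep3[OF irr sym _ cd cU same])
      have lnk: "\<forall>p q. ((Suc p < i \<and> q = Suc p) \<or> (p = i - 1 \<and> q = Suc i) \<or> (Suc i \<le> p \<and> q = Suc p)) \<longrightarrow> link (lcI i (lcI j (lcI i s0))) p q"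
      proof (intro allI impI)
        fix p q assume pq: "(Suc p < i \<and> q = Suc p) \<or> (p = i - 1 \<and> q = Suc i) \<or> (Suc i \<le> p \<and> q = Suc p)"
        then have pq': "(Suc p < i \<and> q = Suc p) \<or> (p = i - 1 \<and> q = Suc i) \<or> (i < p \<and> q = Suc p)" by auto
        show "link (lcI i (lcI j (lcI i s0))) p q" unfolding s0_def
          by (rule Pn) (use cPn eq pq' ij in auto)
      qed
      show ?thesis by (rule concl[OF le3 ag r3 ij(1) _ _ lnk]) (use ij in auto)
    next
      case cLLn
      have "\<not> F c d" using Fcd cLLn eq ij unfolding ef_def by auto
      then have ag: "\<forall>x\<in>A \<union> B. \<forall>y\<in>A \<union> B. local_comp (local_comp F c) d x y = F x y"
        by (rule keep2[OF _ cU same])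
      have lnk: "\<forall>p q. ((Suc p < i \<and> q = Suc p) \<or> (p = i - 1 \<and> q = Suc i) \<or> (Suc i \<le> p \<and> q = Suc p)) \<longrightarrow> link (lcI j (lcI i s0)) p q"
      proof (intro allI impI)
        fix p q assume pq: "(Suc p < i \<and> q = Suc p) \<or> (p = i - 1 \<and> q = Suc i) \<or> (Suc i \<le> p \<and> q = Suc p)"
        then have pq': "(Suc p < i \<and> q = Suc p) \<or> (p = i - 1 \<and> q = Suc i) \<or> (i < p \<and> q = Suc p)" by auto
        show "link (lcI j (lcI i s0)) p q" unfolding s0_def
          by (rule LLn) (use cLLn eq pq' ij in auto)
      qed
      show ?thesis by (rule concl[OF le2 ag r2 ij(1) _ _ lnk]) (use ij in auto)
    qed
  qed
  have "(\<exists>i. 1 \<le> i \<and> i+1 < ?m \<and> ((\<not>al i \<and> \<not>be i) \<or> (card A0 = 1 \<and> al i \<and> \<not>be i) \<or> (card B0 = 1 \<and> \<not>al i \<and> be i))) \<or>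
         (\<exists>i j. 1 \<le> i \<and> i < j \<and> j+1 < ?m \<and> al i = al j \<and> be i = be j \<and> (al i \<or> be i))"
    by (rule choose_case[OF big])
  then show ?thesis
  proof
    assume "\<exists>i. 1 \<le> i \<and> i+1 < ?m \<and> ((\<not>al i \<and> \<not>be i) \<or> (card A0 = 1 \<and> al i \<and> \<not>be i) \<or> (card B0 = 1 \<and> \<not>al i \<and> be i))"
    then obtain i where "1 \<le> i" "i+1 < ?m" "(\<not>al i \<and> \<not>be i) \<or> (card A0 = 1 \<and> al i \<and> \<not>be i) \<or> (card B0 = 1 \<and> \<not>al i \<and> be i)"
      by blast
    then show ?thesis by (rule single)
  next
    assume "\<exists>i j. 1 \<le> i \<and> i < j \<and> j+1 < ?m \<and> al i = al j \<and> be i = be j \<and> (al i \<or> be i)"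
    then obtain i j where "1 \<le> i" "i < j" "j+1 < ?m" "al i = al j" "be i = be j" "al i \<or> be i"
      by blast
    then show ?thesis by (rule pair)
  qed
qed

end

theorem proposition5p6:
  fixes V :: "'a set" and E :: "'a \<Rightarrow> 'a \<Rightarrow> bool" and A B A0 B0 :: "'a set"
  assumes "graph V E" and "prime_graph V E"
    and "A \<subseteq> V" and "B \<subseteq> V" and "A \<inter> B = {}"
    and "card A \<ge> 2" and "card B \<ge> 2"
    and "A0 \<noteq> {}" and "A0 \<subseteq> A" and "B0 \<noteq> {}" and "B0 \<subseteq> B"
    and "\<forall>x\<in>A. \<forall>y\<in>B. E x y \<longleftrightarrow> x \<in> A0 \<and> y \<in> B0"
  shows "\<exists>E'. locally_equiv V E E' \<and>
           (\<forall>x\<in>A \<union> B. \<forall>y\<in>A \<union> B. E' x y \<longleftrightarrow> E x y) \<and>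
           (\<exists>vs. blocking_sequence V E' A B vs \<and>
                 length vs \<le> (if card A0 = 1 \<and> card B0 = 1 then 3
                              else if card A0 = 1 \<or> card B0 = 1 then 4 else 6))"
proof -
  note g = assms(1) and pr = assms(2)
  have finV: "finite V" using g unfolding graph_def by blast
  interpret ABs A B A0 B0
    using assms finV by unfold_locales (auto intro: finite_subset)
  have sE: "str E" using assms(12) unfolding str_def by blast
  let ?S = "V - (A \<union> B)"
  let ?l = "(if card A0 = 1 \<and> card B0 = 1 then 3 else if card A0 = 1 \<or> card B0 = 1 then 4 else 6) :: nat"
  define Q where "Q n \<longleftrightarrow> (\<exists>F L. locally_equiv V E F \<and> (\<forall>x\<in>A \<union> B. \<forall>y\<in>A \<union> B. F x y = E x y) \<and>
      set L \<subseteq> ?S \<and> walk (wA F) (wB F) (lk F) L \<and> length L = n)" for n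
  obtain L0 where L0: "set L0 \<subseteq> ?S" "walk (wA E) (wB E) (lk E) L0"
    using exists_walk[OF g pr assms(3,4) sE assms(6,7)] by blast
  have "Q (length L0)" unfolding Q_def using L0 by (intro exI[of _ E] exI[of _ L0]) (auto intro: locally_equiv.refl)
  then have Qn: "Q (LEAST n. Q n)" by (rule LeastI)
  define n0 where "n0 = (LEAST n. Q n)"
  obtain F vs where F: "locally_equiv V E F" "\<forall>x\<in>A \<union> B. \<forall>y\<in>A \<union> B. F x y = E x y"
    "set vs \<subseteq> ?S" "walk (wA F) (wB F) (lk F) vs" "length vs = n0"
    using Qn unfolding Q_def n0_def by blast
  have gF: "graph V F" using le_graph[OF F(1) g] .
  have sF: "str F" using str_agree[OF sE F(2)] .
  have mn: "\<forall>L. set L \<subseteq> ?S \<longrightarrow> walk (wA F) (wB F) (lk F) L \<longrightarrow> length vs \<le> length L"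
  proof (intro allI impI)
    fix L assume L: "set L \<subseteq> ?S" "walk (wA F) (wB F) (lk F) L"
    have "Q (length L)" unfolding Q_def using F L by blast
    then have "n0 \<le> length L" unfolding n0_def by (rule Least_le)
    then show "length vs \<le> length L" using F(5) by simp
  qed
  have len: "length vs \<le> ?l"
  proof (rule ccontr)
    assume "\<not> length vs \<le> ?l"
    then have big: "length vs > ?l" by simp
    obtain F2 L2 where F2: "locally_equiv V F F2" "\<forall>x\<in>A \<union> B. \<forall>y\<in>A \<union> B. F2 x y = F x y"
      "set L2 \<subseteq> ?S" "walk (wA F2) (wB F2) (lk F2) L2" "length L2 < length vs"
      using shorten[OF gF sF F(3) F(4) mn big] by blast
    have "Q (length L2)" unfolding Q_def
      using le_trans[OF F2(1) F(1)] F2 F(2) by (intro exI[of _ F2] exI[of _ L2]) auto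
    then have "n0 \<le> length L2" unfolding n0_def by (rule Least_le)
    then show False using F2(5) F(5) by simp
  qed
  have dis: "set vs \<inter> (A \<union> B) = {}" using F(3) by blast
  have bs: "blocking_sequence V F A B vs"
    unfolding blocking_sequence_def
  proof (intro conjI allI impI)
    show "set vs \<subseteq> V - (A \<union> B)" using F(3) .
    show "blocking_cond F A B vs" using bc_iff[OF sF dis] F(4) by blast
  next
    fix ws assume ws: "subseq ws vs \<and> ws \<noteq> vs"
    show "\<not> blocking_cond F A B ws"
    proof
      assume bc: "blocking_cond F A B ws"
      have sub: "set ws \<subseteq> set vs" using ws by (auto elim: list_emb_set)
      then have dws: "set ws \<inter> (A \<union> B) = {}" using dis by blast
      have "walk (wA F) (wB F) (lk F) ws" using bc_iff[OF sF dws] bc by blast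
      then have "length vs \<le> length ws" using mn sub F(3) by blast
      moreover have "length ws \<le> length vs" using ws list_emb_length by blast
      ultimately have "ws = vs" using ws subseq_same_length by (metis le_antisym)
      then show False using ws by blast
    qed
  qed
  show ?thesis using F(1) F(2) bs len by blast
qed


end
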